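(* Let $G=(V,E)$ be a hypergraph and let $k$ and $m$ be integers such that the vertices of $G$ can be $k$-colored so that every hyperedge containing at least $m$ vertices contains a vertex of each of the $k$ colors. Then for every integer $t'>1$, with $k'=\binom{k}{t'}+\sum_{i=0}^{t'-2}\binom{k-1}{i}$ and $m'=\max\{m,k(t'-1)+1\}$, there exists a $k'$-coloring of the $t'$-tuples of vertices of $G$ such that every hyperedge containing at least $m'$ vertices contains a $t'$-tuple of each of the $k'$ colors.
   Context: A $t'$-tuple of vertices is a $t'$-element subset of $V$; a hyperedge contains it if it is a subset of the hyperedge. Binomial coefficients $\binom{a}{b}$ with $b>a$ are $0$. *)

theory Defs
  imports Main
begin

definition hypergraph :: "'a set \<Rightarrow> 'a set set \<Rightarrow> bool" where
  "hypergraph V E \<longleftrightarrow> finite V \<and> (\<forall>e\<in>E. e \<subseteq> V)"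

definition tuples :: "nat \<Rightarrow> 'a set \<Rightarrow> 'a set set" where
  "tuples t V = {T. T \<subseteq> V \<and> card T = t}"

definition good_vertex_colouring :: "'a set \<Rightarrow> 'a set set \<Rightarrow> nat \<Rightarrow> nat \<Rightarrow> ('a \<Rightarrow> nat) \<Rightarrow> bool" where
  "good_vertex_colouring V E k m c \<longleftrightarrow>
     (\<forall>v\<in>V. c v < k) \<and>
     (\<forall>e\<in>E. card e \<ge> m \<longrightarrow> (\<forall>j<k. \<exists>v\<in>e. c v = j))"

definition good_tuple_colouring :: "nat \<Rightarrow> 'a set \<Rightarrow> 'a set set \<Rightarrow> nat \<Rightarrow> nat \<Rightarrow> ('a set \<Rightarrow> nat) \<Rightarrow> bool" where
  "good_tuple_colouring t V E k m c \<longleftrightarrow>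
     (\<forall>T\<in>tuples t V. c T < k) \<and>
     (\<forall>e\<in>E. card e \<ge> m \<longrightarrow> (\<forall>j<k. \<exists>T\<in>tuples t V. T \<subseteq> e \<and> c T = j))"

end

theory Submission
  imports Defs
begin

definition sg :: "nat \<Rightarrow> nat \<Rightarrow> nat" where
  "sg r b = (if b < r then b else b - 1)"
definition tu :: "nat \<Rightarrow> nat \<Rightarrow> nat" where
  "tu r a = (if a < r then a else a + 1)"

definition repc :: "('a \<Rightarrow> nat) \<Rightarrow> 'a set \<Rightarrow> nat" where
  "repc c T = (LEAST x. x \<in> c ` T \<and> 2 \<le> card {v\<in>T. c v = x})"

definition col :: "('a \<Rightarrow> nat) \<Rightarrow> 'a set \<Rightarrow> nat set + nat set" where
  "col c T = (if card (c ` T) = card T then Inl (c ` T)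
              else Inr (sg (repc c T) ` (c ` T - {repc c T})))"

definition Cset :: "nat \<Rightarrow> nat \<Rightarrow> (nat set + nat set) set" where
  "Cset k t = Inl ` {S. S \<subseteq> {0..<k} \<and> card S = t} \<union>
              Inr ` {A. A \<subseteq> {0..<k-1} \<and> card A \<le> t - 2}"

lemma sg_tu: "sg r (tu r a) = a" by (simp add: sg_def tu_def)
lemma tu_neq: "tu r a \<noteq> r" by (simp add: tu_def)
lemma inj_tu: "inj (tu r)" by (auto simp: inj_def tu_def split: if_splits)
lemma inj_sg: "inj_on (sg r) (- {r})" by (auto simp: inj_on_def sg_def split: if_splits)

lemma card_P2: "card {A. A \<subseteq> {0..<n} \<and> card A \<le> s} = (\<Sum>i=0..s. n choose i)"
proof -
  have "{A. A \<subseteq> {0..<n} \<and> card A \<le> s} = (\<Union>i\<in>{0..s}. {A. A \<subseteq> {0..<n} \<and> card A = i})"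
    by auto
  also have "card \<dots> = (\<Sum>i=0..s. card {A. A \<subseteq> {0..<n} \<and> card A = i})"
    by (rule card_UN_disjoint) (auto intro: finite_subset[of _ "Pow {0..<n}"])
  also have "\<dots> = (\<Sum>i=0..s. n choose i)"
    by (simp add: n_subsets)
  finally show ?thesis .
qed

lemma card_Cset: "card (Cset k t) = (k choose t) + (\<Sum>i=0..t-2. (k-1) choose i)"
proof -
  have f1: "finite {S. S \<subseteq> {0..<k} \<and> card S = t}"
    by (auto intro: finite_subset[of _ "Pow {0..<k}"])
  have f2: "finite {A. A \<subseteq> {0..<k-1} \<and> card A \<le> t - 2}"
    by (auto intro: finite_subset[of _ "Pow {0..<k-1}"])
  have "card (Cset k t) = card (Inl ` {S. S \<subseteq> {0..<k} \<and> card S = t} :: (nat set + nat set) set)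
      + card (Inr ` {A. A \<subseteq> {0..<k-1} \<and> card A \<le> t - 2} :: (nat set + nat set) set)"
    unfolding Cset_def by (rule card_Un_disjoint) (use f1 f2 in auto)
  also have "\<dots> = card {S. S \<subseteq> {0..<k} \<and> card S = t} + card {A. A \<subseteq> {0..<k-1} \<and> card A \<le> t - 2}"
    by (simp add: card_image)
  finally show ?thesis by (simp add: n_subsets card_P2)
qed

lemma finite_Cset: "finite (Cset k t)"
  unfolding Cset_def
  by (auto intro: finite_subset[of _ "Pow {0..<k}"] finite_subset[of _ "Pow {0..<k-1}"])

lemma repc_ex:
  assumes "finite T" "card (c ` T) \<noteq> card T"
  shows "repc c T \<in> c ` T \<and> 2 \<le> card {v\<in>T. c v = repc c T}"
proof -
  have "\<not> inj_on c T" using assms card_image by blast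
  then obtain x y where xy: "x \<in> T" "y \<in> T" "x \<noteq> y" "c x = c y" by (auto simp: inj_on_def)
  have "{x, y} \<subseteq> {v\<in>T. c v = c x}" using xy by auto
  hence "card {x,y} \<le> card {v\<in>T. c v = c x}" using assms(1) by (intro card_mono) auto
  hence "c x \<in> c ` T \<and> 2 \<le> card {v\<in>T. c v = c x}" using xy by auto
  thus ?thesis unfolding repc_def by (rule LeastI)
qed

lemma col_range:
  assumes "finite T" "\<forall>v\<in>T. c v < k" "card T = t"
  shows "col c T \<in> Cset k t"
proof (cases "card (c ` T) = card T")
  case True
  have "c ` T \<in> {S. S \<subseteq> {0..<k} \<and> card S = t}" using True assms(2,3) by auto
  hence "Inl (c ` T) \<in> Cset k t" unfolding Cset_def by (intro UnI1 imageI)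
  thus ?thesis using True by (simp add: col_def)
next
  case False
  define r where "r = repc c T"
  have r: "r \<in> c ` T" using repc_ex[OF assms(1) False] r_def by auto
  have rk: "r < k" using r assms(2) by auto
  have sub: "sg r ` (c ` T - {r}) \<subseteq> {0..<k-1}"
  proof
    fix y assume "y \<in> sg r ` (c ` T - {r})"
    then obtain b where b: "b \<in> c ` T" "b \<noteq> r" "y = sg r b" by auto
    have "b < k" using b(1) assms(2) by auto
    thus "y \<in> {0..<k-1}" using b(2,3) rk by (cases "b < r") (auto simp: sg_def)
  qed
  have "card (c ` T) \<le> card T" by (rule card_image_le[OF assms(1)])
  hence lt: "card (c ` T) < t" using False assms(3) by linarith
  have "card (sg r ` (c ` T - {r})) \<le> card (c ` T - {r})" by (rule card_image_le) (use assms(1) in simp)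
  also have "\<dots> = card (c ` T) - 1" using r assms(1) by simp
  finally have "card (sg r ` (c ` T - {r})) \<le> t - 2" using lt by linarith
  hence "sg r ` (c ` T - {r}) \<in> {A. A \<subseteq> {0..<k-1} \<and> card A \<le> t - 2}" using sub by blast
  hence "Inr (sg r ` (c ` T - {r})) \<in> Cset k t" unfolding Cset_def by (intro UnI2 imageI)
  thus ?thesis using False by (simp add: col_def r_def)
qed

lemma rainbow_real:
  assumes "S \<subseteq> {0..<k}" "\<forall>j<k. \<exists>v\<in>e. c v = j"
  shows "\<exists>T\<subseteq>e. card T = card S \<and> c ` T = S \<and> inj_on c T"
proof -
  define f where "f = (\<lambda>s. SOME v. v \<in> e \<and> c v = s)"
  have f: "f s \<in> e \<and> c (f s) = s" if "s \<in> S" for s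
  proof -
    have "s < k" using that assms(1) by auto
    hence "\<exists>v. v \<in> e \<and> c v = s" using assms(2) by blast
    thus ?thesis unfolding f_def by (rule someI_ex)
  qed
  have inj: "inj_on f S"
  proof (rule inj_onI)
    fix x y assume "x \<in> S" "y \<in> S" "f x = f y"
    thus "x = y" using f[of x] f[of y] by metis
  qed
  have im: "c ` f ` S = S"
  proof -
    have "c ` f ` S = (\<lambda>s. c (f s)) ` S" by (simp add: image_image)
    also have "\<dots> = (\<lambda>s. s) ` S" by (rule image_cong) (use f in auto)
    finally show ?thesis by simp
  qed
  have ic: "inj_on c (f ` S)"
  proof (rule inj_onI)
    fix x y assume "x \<in> f ` S" "y \<in> f ` S" "c x = c y"
    then obtain a b where "a \<in> S" "b \<in> S" "x = f a" "y = f b" by blast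
    thus "x = y" using f[of a] f[of b] \<open>c x = c y\<close> by metis
  qed
  have sub: "f ` S \<subseteq> e" using f by blast
  have "card (f ` S) = card S" by (rule card_image[OF inj])
  thus ?thesis using sub im ic by blast
qed

lemma nonrainbow_real:
  assumes "A \<subseteq> {0..<k-1}" "card A \<le> t - 2" "t > 1"
    and "\<forall>j<k. \<exists>v\<in>e. c v = j" "r < k" "t \<le> card {v\<in>e. c v = r}" "finite e"
  shows "\<exists>T\<subseteq>e. card T = t \<and> col c T = Inr A"
proof -
  define B where "B = tu r ` A"
  have Bk: "B \<subseteq> {0..<k}" using assms(1,5) by (auto simp: B_def tu_def)
  have rB: "r \<notin> B" unfolding B_def by (metis imageE tu_neq)
  have cB: "card B = card A" unfolding B_def by (rule card_image) (meson inj_tu inj_on_subset subset_UNIV)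
  have fA: "finite A" using assms(1) finite_subset by blast
  obtain W where W: "W \<subseteq> e" "card W = card B" "c ` W = B" "inj_on c W"
    using rainbow_real[OF Bk assms(4)] by blast
  obtain R where R: "R \<subseteq> {v\<in>e. c v = r}" "card R = t - card A" "finite R"
  proof -
    have "t - card A \<le> card {v\<in>e. c v = r}" using assms(6) by linarith
    thus ?thesis using obtain_subset_with_card_n that by blast
  qed
  have R2: "2 \<le> card R" using R(2) assms(2,3) by linarith
  hence Rne: "R \<noteq> {}" by auto
  have disj: "R \<inter> W = {}" using R(1) W(3) rB by auto
  have fW: "finite W" using W(1) assms(7) finite_subset by blast
  define T where "T = R \<union> W"
  have cT: "card T = t" unfolding T_def using card_Un_disjoint[OF R(3) fW disj] R(2) W(2) cB assms(2,3)
    by linarith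
  have fT: "finite T" using R(3) fW T_def by auto
  have img: "c ` T = insert r B" using R(1) Rne W(3) unfolding T_def by auto
  have cimg: "card (c ` T) = card A + 1" using img rB cB fA B_def by simp
  have nr: "card (c ` T) \<noteq> card T" using cimg cT assms(2,3) by linarith
  have rep: "repc c T = r"
  proof -
    have "{v\<in>T. c v = r} = R" using R(1) W(3) rB unfolding T_def by auto
    hence P: "r \<in> c ` T \<and> 2 \<le> card {v\<in>T. c v = r}" using img R2 by auto
    have "r \<le> y" if "y \<in> c ` T \<and> 2 \<le> card {v\<in>T. c v = y}" for y
    proof (rule ccontr)
      assume "\<not> r \<le> y"
      hence "y \<in> B" using that img by auto
      then obtain w where w: "w \<in> W" "c w = y" using W(3) by auto
      have "{v\<in>T. c v = y} = {w}"
      proof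
        show "{v\<in>T. c v = y} \<subseteq> {w}"
        proof
          fix v assume v: "v \<in> {v\<in>T. c v = y}"
          have "v \<notin> R" using v R(1) \<open>y \<in> B\<close> rB by auto
          hence "v \<in> W" using v T_def by auto
          thus "v \<in> {w}" using W(4) w v by (auto simp: inj_on_def)
        qed
      qed (use w T_def in auto)
      thus False using that by simp
    qed
    thus ?thesis unfolding repc_def using P by (intro Least_equality) auto
  qed
  have "c ` T - {r} = B" using img rB by auto
  hence "sg r ` (c ` T - {r}) = A" unfolding B_def by (simp add: image_image sg_tu)
  hence "col c T = Inr A" unfolding col_def using nr rep by simp
  thus ?thesis using cT T_def R(1) W(1) by (intro exI[of _ T]) auto
qed

lemma pigeon:
  assumes "finite e" "\<forall>v\<in>e. c v < k" "k * (t - 1) + 1 \<le> card e"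
  shows "\<exists>r<k. t \<le> card {v\<in>e. c v = r}"
proof (rule ccontr)
  assume "\<not> ?thesis"
  hence lt: "\<forall>r\<in>{0..<k}. card {v\<in>e. c v = r} \<le> t - 1" by auto
  have "e = (\<Union>r\<in>{0..<k}. {v\<in>e. c v = r})" using assms(2) by auto
  hence "card e \<le> (\<Sum>r\<in>{0..<k}. card {v\<in>e. c v = r})" by (metis card_UN_le finite_atLeastLessThan)
  also have "\<dots> \<le> k * (t - 1)" using sum_bounded_above[of "{0..<k}" "\<lambda>r. card {v\<in>e. c v = r}" "t - 1"] lt by simp
  finally show False using assms(3) by simp
qed

theorem proposition4:
  fixes V :: "'a set" and E :: "'a set set" and k m t :: nat and c :: "'a \<Rightarrow> nat"
  assumes "hypergraph V E"
    and "good_vertex_colouring V E k m c"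
    and "t > 1"
  shows "\<exists>c'. good_tuple_colouring t V E
                 ((k choose t) + (\<Sum>i=0..t-2. (k-1) choose i))
                 (max m (k*(t-1)+1)) c'"
proof -
  obtain g where g: "bij_betw g (Cset k t) {0..<card (Cset k t)}"
    using ex_bij_betw_finite_nat[OF finite_Cset] by blast
  have fV: "finite V" and EV: "\<forall>e\<in>E. e \<subseteq> V" using assms(1) by (auto simp: hypergraph_def)
  have ck: "\<forall>v\<in>V. c v < k" and all: "\<forall>e\<in>E. card e \<ge> m \<longrightarrow> (\<forall>j<k. \<exists>v\<in>e. c v = j)"
    using assms(2) by (auto simp: good_vertex_colouring_def)
  define c' where "c' = (\<lambda>T. g (col c T))"
  have "good_tuple_colouring t V E (card (Cset k t)) (max m (k*(t-1)+1)) c'"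
    unfolding good_tuple_colouring_def
  proof (intro conjI ballI allI impI)
    fix T assume "T \<in> tuples t V"
    hence "T \<subseteq> V" "card T = t" by (auto simp: tuples_def)
    hence "col c T \<in> Cset k t" using col_range[of T c k t] fV ck finite_subset by blast
    thus "c' T < card (Cset k t)" using g c'_def bij_betwE by fastforce
  next
    fix e j assume e: "e \<in> E" "max m (k * (t - 1) + 1) \<le> card e" and j: "j < card (Cset k t)"
    have eV: "e \<subseteq> V" using EV e by auto
    have fe: "finite e" using eV fV finite_subset by blast
    have allj: "\<forall>j<k. \<exists>v\<in>e. c v = j" using all e by auto
    obtain r where r: "r < k" "t \<le> card {v\<in>e. c v = r}"
      using pigeon[OF fe _ ] e eV ck by (metis max.bounded_iff subset_iff)
    define x where "x = inv_into (Cset k t) g j"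
    have x: "x \<in> Cset k t" "g x = j" using j g unfolding x_def
      by (auto intro: inv_into_into f_inv_into_f simp: bij_betw_def)
    have "\<exists>T\<subseteq>e. card T = t \<and> col c T = x"
    proof (cases x)
      case (Inl S)
      hence S: "S \<subseteq> {0..<k}" "card S = t" using x(1) by (auto simp: Cset_def)
      then obtain T where T: "T \<subseteq> e" "card T = t" "c ` T = S" "inj_on c T"
        using rainbow_real[OF S(1) allj] by auto
      hence "col c T = Inl S" using card_image[OF T(4)] by (simp add: col_def)
      thus ?thesis using T Inl by auto
    next
      case (Inr A)
      hence A: "A \<subseteq> {0..<k-1}" "card A \<le> t - 2" using x(1) by (auto simp: Cset_def)
      show ?thesis using nonrainbow_real[OF A assms(3) allj r fe] Inr by auto
    qed
    then obtain T where "T \<subseteq> e" "card T = t" "col c T = x" by blast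
    thus "\<exists>T\<in>tuples t V. T \<subseteq> e \<and> c' T = j"
      using eV x(2) by (intro bexI[of _ T]) (auto simp: c'_def tuples_def)
  qed
  thus ?thesis using card_Cset by metis
qed

end
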